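(* Let $P, Q \subseteq \mathbb{R}^d$ be polytopes such that $L_P(s) = L_Q(s)$ for all real $s \ge 0$. Then $L_{\operatorname{ppyr} P}(s) = L_{\operatorname{ppyr} Q}(s)$ for all real $s \ge 0$.
   Context: For a polytope $P \subseteq \mathbb{R}^d$ and real $s \ge 0$, $L_P(s) = \#(sP \cap \mathbb{Z}^d)$, where $sP = \{sx : x \in P\}$ (so $0P=\{0\}$ and $L_P(0)=1$). The pseudopyramid of $P$ is $\operatorname{ppyr}(P) = \operatorname{conv}(P \cup \{0\}) = \bigcup_{0 \le \lambda \le 1} \lambda P$. *)

theory Defs
  imports "HOL-Analysis.Analysis"
begin

definition lattice_points :: "(real ^ 'n) set" where
  "lattice_points = {x. \<forall>i. x $ i \<in> \<int>}"

definition dilate :: "real \<Rightarrow> (real ^ 'n) set \<Rightarrow> (real ^ 'n) set" where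
  "dilate s P = (if s = 0 then {0} else (\<lambda>x. s *\<^sub>R x) ` P)"

definition lattice_count :: "(real ^ 'n) set \<Rightarrow> real \<Rightarrow> nat" where
  "lattice_count P s = card (dilate s P \<inter> lattice_points)"

definition ppyr :: "(real ^ 'n) set \<Rightarrow> (real ^ 'n) set" where
  "ppyr P = convex hull (P \<union> {0})"

end

theory Submission
  imports Defs
begin


lemma count_by_jumps:
  fixes T :: "'a \<Rightarrow> real set"
  assumes "finite S" "finite E"
   and iv: "\<And>x. x\<in>S \<Longrightarrow> T x \<noteq> {} \<Longrightarrow> T x = {a x..b x} \<and> a x \<in> E \<and> b x \<in> E"
   and gap: "\<And>e e'. e\<in>E \<Longrightarrow> e'\<in>E \<Longrightarrow> e'<e \<Longrightarrow> e' < e-\<delta>"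
   and dpos: "\<delta> > 0"
  shows "int (card {x\<in>S. T x \<noteq> {}}) = (\<Sum>e\<in>E. int (card {x\<in>S. e \<in> T x}) - int (card {x\<in>S. e-\<delta> \<in> T x}))"
proof -
  have step: "int (card {x\<in>S. e \<in> T x}) - int (card {x\<in>S. e-\<delta> \<in> T x})
      = int (card {x\<in>{x\<in>S. T x \<noteq> {}}. a x = e})" if e: "e \<in> E" for e
  proof -
    have sub: "{x\<in>S. e-\<delta> \<in> T x} \<subseteq> {x\<in>S. e \<in> T x}"
    proof safe
      fix x assume x: "x \<in> S" "e - \<delta> \<in> T x"
      then have ne: "T x \<noteq> {}" by auto
      have Tx: "T x = {a x..b x}" and bE: "b x \<in> E" using iv[OF x(1) ne] by auto
      have A: "a x \<le> e - \<delta>" "e - \<delta> \<le> b x" using x(2) unfolding Tx by auto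
      have "\<not> b x < e" using gap[OF e bE] A(2) by auto
      then show "e \<in> T x" unfolding Tx using A dpos by auto
    qed
    have diff: "{x\<in>S. e \<in> T x} - {x\<in>S. e-\<delta> \<in> T x} = {x\<in>{x\<in>S. T x \<noteq> {}}. a x = e}"
    proof (intro equalityI subsetI)
      fix x assume xx: "x \<in> {x\<in>S. e \<in> T x} - {x\<in>S. e-\<delta> \<in> T x}"
      then have x: "x \<in> S" "e \<in> T x" "e - \<delta> \<notin> T x" by auto
      then have ne: "T x \<noteq> {}" by auto
      have Tx: "T x = {a x..b x}" and aE: "a x \<in> E" using iv[OF x(1) ne] by auto
      have A: "a x \<le> e" "e \<le> b x" using x(2) unfolding Tx by auto
      have "\<not> a x \<le> e - \<delta>" using x(3) A dpos unfolding Tx by auto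
      moreover have "\<not> a x < e" using gap[OF e aE] calculation by auto
      ultimately have "a x = e" using A by auto
      then show "x \<in> {x\<in>{x\<in>S. T x \<noteq> {}}. a x = e}" using x(1) ne by blast
    next
      fix x assume xx: "x \<in> {x\<in>{x\<in>S. T x \<noteq> {}}. a x = e}"
      then have x: "x \<in> S" "T x \<noteq> {}" "a x = e" by auto
      have Tx: "T x = {a x..b x}" using iv[OF x(1,2)] by auto
      have "a x \<le> b x" using x(2) unfolding Tx by auto
      then have "e \<in> T x" unfolding Tx using x(3) by auto
      moreover have "e - \<delta> \<notin> T x" unfolding Tx using dpos x(3) by auto
      ultimately show "x \<in> {x\<in>S. e \<in> T x} - {x\<in>S. e-\<delta> \<in> T x}" using x(1) by blast
    qed
    have fin: "finite {x\<in>S. e \<in> T x}" using assms(1) by auto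
    have fin2: "finite {x\<in>S. e - \<delta> \<in> T x}" using assms(1) by auto
    have "card ({x\<in>S. e \<in> T x} - {x\<in>S. e-\<delta> \<in> T x}) = card {x\<in>S. e \<in> T x} - card {x\<in>S. e-\<delta> \<in> T x}"
      by (rule card_Diff_subset[OF fin2 sub])
    moreover have "card {x\<in>S. e-\<delta> \<in> T x} \<le> card {x\<in>S. e \<in> T x}" by (rule card_mono[OF fin sub])
    ultimately show ?thesis using diff by simp
  qed
  have "(\<Sum>e\<in>E. int (card {x\<in>S. e \<in> T x}) - int (card {x\<in>S. e-\<delta> \<in> T x}))
      = (\<Sum>e\<in>E. \<Sum>x\<in>{x\<in>{x\<in>S. T x \<noteq> {}}. a x = e}. (1::int))"
    using step by simp
  also have "\<dots> = (\<Sum>x\<in>{x\<in>S. T x \<noteq> {}}. (1::int))"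
  proof (rule sum.group)
    show "finite {x\<in>S. T x \<noteq> {}}" using assms(1) by auto
    show "finite E" by fact
    show "a ` {x\<in>S. T x \<noteq> {}} \<subseteq> E" using iv by blast
  qed
  finally show ?thesis by simp
qed

lemma exists_gap:
  fixes E :: "real set"
  assumes "finite E" "\<And>e. e \<in> E \<Longrightarrow> e > 0"
  shows "\<exists>\<delta>>0. (\<forall>e\<in>E. \<delta> < e) \<and> (\<forall>e\<in>E. \<forall>e'\<in>E. e' < e \<longrightarrow> e' < e - \<delta>)"
proof -
  define D where "D = insert 1 (E \<union> (\<lambda>(e,e'). e - e') ` {(e,e'). e \<in> E \<and> e' \<in> E \<and> e' < e})"
  have "{(e,e'). e \<in> E \<and> e' \<in> E \<and> e' < e} \<subseteq> E \<times> E" by auto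
  then have "finite {(e,e'). e \<in> E \<and> e' \<in> E \<and> e' < e}"
    by (rule finite_subset[OF _ finite_cartesian_product[OF assms(1) assms(1)]])
  then have fD: "finite D" unfolding D_def using assms(1) by simp
  have pD: "\<forall>d\<in>D. d > 0" unfolding D_def using assms(2) by auto
  define \<delta> where "\<delta> = Min D / 2"
  have "D \<noteq> {}" unfolding D_def by blast
  then have "Min D > 0" using Min_in[OF fD] pD by blast
  then have "\<delta> > 0" by (simp add: \<delta>_def)
  moreover have "\<forall>e\<in>E. \<delta> < e"
  proof
    fix e assume "e \<in> E" then have "Min D \<le> e" using fD by (auto simp: D_def)
    then show "\<delta> < e" using \<open>Min D > 0\<close> by (simp add: \<delta>_def)
  qed
  moreover have "\<forall>e\<in>E. \<forall>e'\<in>E. e' < e \<longrightarrow> e' < e - \<delta>"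
  proof (intro ballI impI)
    fix e e' assume "e \<in> E" "e' \<in> E" "e' < e"
    then have "e - e' \<in> D" by (auto simp: D_def image_iff intro!: bexI[of _ "(e,e')"])
    then have "Min D \<le> e - e'" using fD by auto
    then show "e' < e - \<delta>" using \<open>Min D > 0\<close> by (simp add: \<delta>_def)
  qed
  ultimately show ?thesis by blast
qed



lemma mem_dilate: "t > 0 \<Longrightarrow> x \<in> dilate t P \<longleftrightarrow> inverse t *\<^sub>R x \<in> P"
proof -
  assume t: "t > 0"
  have l1: "x = t *\<^sub>R (inverse t *\<^sub>R x)" using t by simp
  have l3: "inverse t *\<^sub>R (t *\<^sub>R p) = p" for p :: "real^'a" using t by simp
  show ?thesis
  proof
    assume "x \<in> dilate t P"
    then have "\<exists>p\<in>P. x = t *\<^sub>R p" using t by (simp add: dilate_def image_iff)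
    then obtain p where p: "p \<in> P" "x = t *\<^sub>R p" by blast
    then show "inverse t *\<^sub>R x \<in> P" using l3[of p] by metis
  next
    assume h: "inverse t *\<^sub>R x \<in> P"
    have "x \<in> (\<lambda>x. t *\<^sub>R x) ` P" using l1 h by (rule image_eqI)
    then show "x \<in> dilate t P" using t by (simp add: dilate_def)
  qed
qed

lemma finite_lat: "finite (lattice_points \<inter> cball (0::real^'n) r)"
proof -
  define F where "F = {k::real. k \<in> \<int> \<and> \<bar>k\<bar> \<le> r}"
  have fF: "finite F" unfolding F_def by (rule finite_abs_int_segment)
  have "lattice_points \<inter> cball (0::real^'n) r \<subseteq> (\<lambda>f. \<chi> i. f i) ` (PiE UNIV (\<lambda>_. F))"
  proof
    fix x :: "real^'n" assume x: "x \<in> lattice_points \<inter> cball 0 r"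
    have "x $ i \<in> F" for i
    proof -
      have "\<bar>x $ i\<bar> \<le> norm x" by (rule component_le_norm_cart)
      moreover have "norm x \<le> r" using x by simp
      moreover have "x $ i \<in> \<int>" using x unfolding lattice_points_def by blast
      ultimately show ?thesis unfolding F_def by simp
    qed
    moreover have "x = (\<chi> i. x $ i)" by simp
    moreover have "(\<lambda>i. x $ i) \<in> PiE UNIV (\<lambda>_. F)" using calculation(1) by (auto simp: PiE_def)
    ultimately show "x \<in> (\<lambda>f. \<chi> i. f i) ` (PiE UNIV (\<lambda>_. F))"
      by (rule_tac image_eqI) auto
  qed
  moreover have "finite ((\<lambda>f. \<chi> i. f i) ` (PiE UNIV (\<lambda>_. F)) :: (real^'n) set)"
    using fF by (intro finite_imageI finite_PiE) auto
  ultimately show ?thesis by (rule finite_subset)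
qed
lemma ppyr_char:
  assumes "convex P" "s > 0"
  shows "x \<in> dilate s (ppyr P) \<longleftrightarrow> x = 0 \<or> (\<exists>t. 0<t \<and> t\<le>s \<and> x \<in> dilate t P)"
proof (cases "P = {}")
  case True
  then show ?thesis using assms by (auto simp: ppyr_def dilate_def)
next
  case False
  have h: "ppyr P = {x. \<exists>u\<ge>0. \<exists>v\<ge>0. \<exists>b. u + v = 1 \<and> b \<in> P \<and> x = v *\<^sub>R b}"
    unfolding ppyr_def using convex_hull_insert[OF False, of 0] convex_hull_eq[of P] assms(1) by simp
  show ?thesis
  proof
    assume "x \<in> dilate s (ppyr P)"
    then obtain u v b where uv: "u\<ge>0" "v\<ge>0" "u+v=1" "b\<in>P" "x = s *\<^sub>R (v *\<^sub>R b)"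
      using assms(2) unfolding dilate_def h by auto
    show "x = 0 \<or> (\<exists>t. 0<t \<and> t\<le>s \<and> x \<in> dilate t P)"
    proof (cases "v = 0")
      case True then show ?thesis using uv by simp
    next
      case False
      then have "0 < s * v" "s * v \<le> s" using uv assms(2) by auto
      moreover have "x \<in> dilate (s * v) P" using uv \<open>0 < s * v\<close> by (auto simp: dilate_def)
      ultimately show ?thesis by blast
    qed
  next
    assume "x = 0 \<or> (\<exists>t. 0<t \<and> t\<le>s \<and> x \<in> dilate t P)"
    then show "x \<in> dilate s (ppyr P)"
    proof
      assume "x = 0"
      obtain b where "b \<in> P" using False by auto
      then have "0 \<in> ppyr P" unfolding h by (intro CollectI exI[of _ 1] exI[of _ 0]) auto
      then show ?thesis using \<open>x = 0\<close> assms(2) by (auto simp: dilate_def intro: image_eqI[of _ _ 0])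
    next
      assume "\<exists>t. 0<t \<and> t\<le>s \<and> x \<in> dilate t P"
      then obtain t b where t: "0<t" "t\<le>s" "b \<in> P" "x = t *\<^sub>R b" by (auto simp: dilate_def)
      have "(t/s) *\<^sub>R b \<in> ppyr P" unfolding h using t assms(2)
        by (intro CollectI exI[of _ "1 - t/s"] exI[of _ "t/s"]) auto
      moreover have "x = s *\<^sub>R ((t/s) *\<^sub>R b)" using t assms(2) by simp
      ultimately have "x \<in> (\<lambda>y. s *\<^sub>R y) ` ppyr P" by blast
      then show ?thesis using assms(2) by (simp add: dilate_def)
    qed
  qed
qed

lemma T_interval:
  fixes x :: "real^'n" and P :: "(real^'n) set"
  assumes "compact P" "convex P" "x \<noteq> 0" "R > 0" "\<And>p. p \<in> P \<Longrightarrow> norm p \<le> R"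
    and ne: "{t. 0<t \<and> t\<le>s \<and> x \<in> dilate t P} \<noteq> {}"
  defines "T \<equiv> {t. 0<t \<and> t\<le>s \<and> x \<in> dilate t P}"
  shows "T = {Inf T..Sup T} \<and> 0 < Inf T \<and> Sup T \<le> s"
proof -
  define m where "m = norm x / R"
  have m: "m > 0" using assms by (simp add: m_def)
  have Tm: "T = {m..s} \<inter> (\<lambda>t. inverse t *\<^sub>R x) -` P"
  proof safe
    fix t assume "t \<in> T"
    then have t: "0 < t" "t \<le> s" "inverse t *\<^sub>R x \<in> P" by (auto simp: T_def mem_dilate)
    then have "norm (inverse t *\<^sub>R x) \<le> R" using assms(5) by blast
    then have "norm x / t \<le> R" using t by (simp add: divide_inverse mult.commute)
    then have "norm x \<le> R * t" using t by (simp add: divide_le_eq)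
    then show "t \<in> {m..s}" using t assms(4) by (simp add: m_def divide_le_eq mult.commute)
  next
    fix t assume "t \<in> T"
    then show "t \<in> (\<lambda>t. inverse t *\<^sub>R x) -` P" by (auto simp: T_def mem_dilate)
  next
    fix t assume "t \<in> {m..s}" "inverse t *\<^sub>R x \<in> P"
    then show "t \<in> T" using m by (auto simp: T_def mem_dilate)
  qed
  have co: "continuous_on {m..s} (\<lambda>t. inverse t *\<^sub>R x)"
    using m by (intro continuous_on_scaleR continuous_on_inverse continuous_on_id continuous_on_const) auto
  have cl: "closed T" unfolding Tm
    by (rule continuous_closed_preimage[OF co closed_atLeastAtMost compact_imp_closed[OF assms(1)]])
  have bb: "bdd_below T" "bdd_above T" unfolding Tm by (auto intro: bdd_belowI[of _ m] bdd_aboveI[of _ s])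
  have T0: "T \<noteq> {}" using ne by (simp add: T_def)
  have inf: "Inf T \<in> T" by (rule closed_contains_Inf[OF T0 bb(1) cl])
  have sup: "Sup T \<in> T" by (rule closed_contains_Sup[OF T0 bb(2) cl])
  have "{Inf T..Sup T} \<subseteq> T"
  proof
    fix t assume t: "t \<in> {Inf T..Sup T}"
    define a b where "a = Inf T" and "b = Sup T"
    have a: "0<a" "a\<le>s" "inverse a *\<^sub>R x \<in> P" using inf by (auto simp: a_def T_def mem_dilate)
    have b: "0<b" "b\<le>s" "inverse b *\<^sub>R x \<in> P" using sup by (auto simp: b_def T_def mem_dilate)
    have tab: "a \<le> t" "t \<le> b" using t by (auto simp: a_def b_def)
    have tpos: "0 < t" using a tab by auto
    have "inverse t *\<^sub>R x \<in> P"
    proof (cases "a = b")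
      case True then have "t = a" using tab by auto
      then show ?thesis using a by simp
    next
      case False
      then have ab: "a < b" using tab by auto
      have ia: "inverse b < inverse a" using ab a by (simp add: less_imp_inverse_less)
      have it1: "inverse t \<le> inverse a" using tab a by (simp add: le_imp_inverse_le)
      have it2: "inverse b \<le> inverse t" using tab tpos by (simp add: le_imp_inverse_le)
      define \<mu> where "\<mu> = (inverse a - inverse t) / (inverse a - inverse b)"
      have mu: "0 \<le> \<mu>" "\<mu> \<le> 1" using ia it1 it2 by (auto simp: \<mu>_def divide_le_eq)
      have D: "\<mu> * (inverse a - inverse b) = inverse a - inverse t"
      proof -
        have nz: "inverse a - inverse b \<noteq> 0" using ia by linarith
        show ?thesis unfolding \<mu>_def using nz by simp
      qed
      have eq: "inverse t = (1-\<mu>) * inverse a + \<mu> * inverse b"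
        using D by (simp add: algebra_simps)
      have "(1-\<mu>) *\<^sub>R (inverse a *\<^sub>R x) + \<mu> *\<^sub>R (inverse b *\<^sub>R x) \<in> P"
        using convexD[OF assms(2) a(3) b(3), of "1-\<mu>" \<mu>] mu by simp
      also have "(1-\<mu>) *\<^sub>R (inverse a *\<^sub>R x) + \<mu> *\<^sub>R (inverse b *\<^sub>R x) = inverse t *\<^sub>R x"
        by (simp add: eq scaleR_add_left)
      finally show ?thesis .
    qed
    then show "t \<in> T" using tpos tab b by (auto simp: T_def mem_dilate)
  qed
  moreover have "T \<subseteq> {Inf T..Sup T}" using bb by (auto intro: cInf_lower cSup_upper)
  ultimately have "T = {Inf T..Sup T}" by (rule equalityI[rotated])
  moreover have "0 < Inf T" using inf unfolding T_def by blast
  moreover have "Sup T \<le> s" using sup unfolding T_def by blast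
  ultimately show ?thesis by blast
qed



lemma norm_bound_dilate:
  assumes "0 < t" "\<forall>p\<in>P. norm p \<le> R" "x \<in> dilate t P"
  shows "norm x \<le> R * t"
proof -
  have "inverse t *\<^sub>R x \<in> P" using assms mem_dilate by blast
  then have "norm (inverse t *\<^sub>R x) \<le> R" using assms(2) by blast
  then have "norm x / t \<le> R" using assms(1) by (simp add: divide_inverse mult.commute)
  then show ?thesis using assms(1) by (simp add: divide_le_eq)
qed

lemma zero_lat: "(0::real^'n) \<in> lattice_points"
  unfolding lattice_points_def by simp

lemma count_split:
  fixes P :: "(real^'n) set"
  assumes "s>0" "R>0" "\<forall>p\<in>P. norm p \<le> R" "0<t" "t\<le>s"
  shows "lattice_count P t = (if 0\<in>P then 1 else 0) +
     card {x\<in>(lattice_points \<inter> cball 0 (s*R)) - {0}. t \<in> {t. 0<t \<and> t\<le>s \<and> x \<in> dilate t P}}"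
proof -
  define A where "A = {x\<in>(lattice_points \<inter> cball 0 (s*R)) - {0}. t \<in> {t. 0<t \<and> t\<le>s \<and> x \<in> dilate t P}}"
  have fA: "finite A" unfolding A_def by (rule finite_subset[OF _ finite_lat[of "s*R"]]) auto
  have z: "0 \<in> dilate t P \<longleftrightarrow> 0 \<in> P" using mem_dilate[OF assms(4), of 0 P] by simp
  have eq: "dilate t P \<inter> lattice_points = (if 0\<in>P then {0} else {}) \<union> A"
  proof (intro equalityI subsetI)
    fix x assume x: "x \<in> dilate t P \<inter> lattice_points"
    have "norm x \<le> R * t" using norm_bound_dilate[OF assms(4,3)] x by blast
    also have "\<dots> \<le> s * R" using assms by (simp add: mult.commute mult_left_mono)
    finally have "norm x \<le> s * R" .
    then show "x \<in> (if 0\<in>P then {0} else {}) \<union> A" using x z assms(4,5) unfolding A_def by auto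
  next
    fix x assume "x \<in> (if 0\<in>P then {0} else {}) \<union> A"
    then show "x \<in> dilate t P \<inter> lattice_points" using z zero_lat unfolding A_def
      by (auto split: if_splits)
  qed
  have c1: "card (dilate t P \<inter> lattice_points) = card (if 0\<in>P then {0} else {}) + card A"
    unfolding eq by (cases "0 \<in> P") (use fA in \<open>auto simp: A_def\<close>)
  have c2: "card (if 0\<in>P then {0::real^'n} else {}) = (if 0\<in>P then 1 else 0)" by simp
  have "lattice_count P t = card (if 0\<in>P then {0::real^'n} else {}) + card A"
    unfolding lattice_count_def by (rule c1)
  then show ?thesis unfolding A_def c2 .
qed

lemma ppyr_count:
  fixes P :: "(real^'n) set"
  assumes "convex P" "s>0" "R>0" "\<forall>p\<in>P. norm p \<le> R"
  shows "lattice_count (ppyr P) s =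
     Suc (card {x\<in>(lattice_points \<inter> cball 0 (s*R)) - {0}. {t. 0<t \<and> t\<le>s \<and> x \<in> dilate t P} \<noteq> {}})"
proof -
  define A where "A = {x\<in>(lattice_points \<inter> cball 0 (s*R)) - {0}. {t. 0<t \<and> t\<le>s \<and> x \<in> dilate t P} \<noteq> {}}"
  have fA: "finite A" unfolding A_def by (rule finite_subset[OF _ finite_lat[of "s*R"]]) auto
  have eq: "dilate s (ppyr P) \<inter> lattice_points = insert 0 A"
  proof (intro equalityI subsetI)
    fix x assume x: "x \<in> dilate s (ppyr P) \<inter> lattice_points"
    show "x \<in> insert 0 A"
    proof (cases "x = 0")
      case False
      have "x \<in> dilate s (ppyr P)" using x by blast
      then have "x = 0 \<or> (\<exists>t. 0<t \<and> t\<le>s \<and> x \<in> dilate t P)" by (rule ppyr_char[OF assms(1,2), THEN iffD1])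
      then obtain t where t: "0<t" "t\<le>s" "x \<in> dilate t P" using False by blast
      have "norm x \<le> R * t" using norm_bound_dilate[OF t(1) assms(4) t(3)] .
      also have "\<dots> \<le> s * R" using assms t by (simp add: mult.commute mult_left_mono)
      finally have "norm x \<le> s * R" .
      then have "x \<in> cball 0 (s*R)" by simp
      moreover have "x \<in> lattice_points" using x by blast
      moreover have "{t. 0<t \<and> t\<le>s \<and> x \<in> dilate t P} \<noteq> {}" using t by blast
      ultimately have "x \<in> A" unfolding A_def using False by blast
      then show ?thesis by blast
    qed simp
  next
    fix x assume "x \<in> insert 0 A"
    then show "x \<in> dilate s (ppyr P) \<inter> lattice_points"
    proof
      assume "x = 0"
      have "(0::real^'n) \<in> dilate s (ppyr P)" by (rule ppyr_char[OF assms(1,2), THEN iffD2]) simp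
      then show ?thesis using zero_lat \<open>x = 0\<close> by blast
    next
      assume "x \<in> A"
      then have xl: "x \<in> lattice_points" and "{t. 0<t \<and> t\<le>s \<and> x \<in> dilate t P} \<noteq> {}"
        unfolding A_def by blast+
      then obtain t where "0<t" "t\<le>s" "x \<in> dilate t P" by blast
      then have "x \<in> dilate s (ppyr P)" by (intro ppyr_char[OF assms(1,2), THEN iffD2]) blast
      then show ?thesis using xl by blast
    qed
  qed
  have z: "0 \<notin> A" unfolding A_def by blast
  have "lattice_count (ppyr P) s = Suc (card A)" unfolding lattice_count_def eq
    by (rule card_insert_disjoint[OF fA z])
  then show ?thesis unfolding A_def .
qed



lemma iv_le: "T = {a..b} \<Longrightarrow> T \<noteq> {} \<Longrightarrow> (a::real) \<le> b" by auto

theorem lemma2p1: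
  fixes P Q :: "(real ^ 'n) set"
  assumes "polytope P" and "polytope Q"
    and "\<forall>s\<ge>0. lattice_count P s = lattice_count Q s"
  shows "\<forall>s\<ge>0. lattice_count (ppyr P) s = lattice_count (ppyr Q) s"
proof (intro allI impI)
  fix s :: real assume "s \<ge> 0"
  show "lattice_count (ppyr P) s = lattice_count (ppyr Q) s"
  proof (cases "s = 0")
    case True then show ?thesis by (simp add: lattice_count_def dilate_def)
  next
    case False
    then have s: "s > 0" using \<open>s \<ge> 0\<close> by simp
    have cP: "compact P" "convex P" "compact Q" "convex Q"
      using assms(1,2) polytope_imp_compact polytope_imp_convex by auto
    have "bounded (P \<union> Q)" using cP compact_imp_bounded by auto
    then obtain R where R: "R > 0" "\<forall>p\<in>P \<union> Q. norm p \<le> R" by (auto simp: bounded_pos)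
    have RP: "\<forall>p\<in>P. norm p \<le> R" and RQ: "\<forall>p\<in>Q. norm p \<le> R" using R(2) by auto
    define S where "S = (lattice_points \<inter> cball 0 (s*R)) - {0::real^'n}"
    have fS: "finite S" unfolding S_def using finite_lat by blast
    define TP where "TP x = {t. 0<t \<and> t\<le>s \<and> x \<in> dilate t P}" for x
    define TQ where "TQ x = {t. 0<t \<and> t\<le>s \<and> x \<in> dilate t Q}" for x
    have ivP: "TP x = {Inf (TP x)..Sup (TP x)} \<and> 0 < Inf (TP x) \<and> Sup (TP x) \<le> s"
      if "x \<in> S" "TP x \<noteq> {}" for x
      unfolding TP_def
      by (rule T_interval[OF cP(1,2) _ R(1)]) (use that RP in \<open>auto simp: S_def TP_def\<close>)
    have ivQ: "TQ x = {Inf (TQ x)..Sup (TQ x)} \<and> 0 < Inf (TQ x) \<and> Sup (TQ x) \<le> s"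
      if "x \<in> S" "TQ x \<noteq> {}" for x
      unfolding TQ_def
      by (rule T_interval[OF cP(3,4) _ R(1)]) (use that RQ in \<open>auto simp: S_def TQ_def\<close>)
    define E where "E = (\<lambda>x. Inf (TP x)) ` {x\<in>S. TP x \<noteq> {}} \<union> (\<lambda>x. Sup (TP x)) ` {x\<in>S. TP x \<noteq> {}}
      \<union> (\<lambda>x. Inf (TQ x)) ` {x\<in>S. TQ x \<noteq> {}} \<union> (\<lambda>x. Sup (TQ x)) ` {x\<in>S. TQ x \<noteq> {}}"
    have fE: "finite E" unfolding E_def using fS by auto
    have Epos: "0 < e \<and> e \<le> s" if "e \<in> E" for e
    proof -
      have "\<exists>x\<in>S. (TP x \<noteq> {} \<and> (e = Inf (TP x) \<or> e = Sup (TP x))) \<or>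
                  (TQ x \<noteq> {} \<and> (e = Inf (TQ x) \<or> e = Sup (TQ x)))"
        using that unfolding E_def by blast
      then obtain x where x: "x \<in> S" and
        h: "(TP x \<noteq> {} \<and> (e = Inf (TP x) \<or> e = Sup (TP x))) \<or>
            (TQ x \<noteq> {} \<and> (e = Inf (TQ x) \<or> e = Sup (TQ x)))" by blast
      show ?thesis
      proof (cases "TP x \<noteq> {} \<and> (e = Inf (TP x) \<or> e = Sup (TP x))")
        case True
        then have ne: "TP x \<noteq> {}" by blast
        have i: "TP x = {Inf (TP x)..Sup (TP x)}" "0 < Inf (TP x)" "Sup (TP x) \<le> s"
          using ivP[OF x ne] by blast+
        have "Inf (TP x) \<le> Sup (TP x)" by (rule iv_le[OF i(1) ne])
        then show ?thesis using True i(2,3) by auto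
      next
        case False
        then have ne: "TQ x \<noteq> {}" and ee: "e = Inf (TQ x) \<or> e = Sup (TQ x)" using h by blast+
        have i: "TQ x = {Inf (TQ x)..Sup (TQ x)}" "0 < Inf (TQ x)" "Sup (TQ x) \<le> s"
          using ivQ[OF x ne] by blast+
        have "Inf (TQ x) \<le> Sup (TQ x)" by (rule iv_le[OF i(1) ne])
        then show ?thesis using ee i(2,3) by auto
      qed
    qed
    obtain \<delta> where d: "\<delta> > 0" "\<forall>e\<in>E. \<delta> < e" "\<forall>e\<in>E. \<forall>e'\<in>E. e' < e \<longrightarrow> e' < e - \<delta>"
      using exists_gap[OF fE] Epos by blast
    have jP: "int (card {x\<in>S. TP x \<noteq> {}}) =
        (\<Sum>e\<in>E. int (card {x\<in>S. e \<in> TP x}) - int (card {x\<in>S. e-\<delta> \<in> TP x}))"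
    proof (rule count_by_jumps[OF fS fE, where a = "\<lambda>x. Inf (TP x)" and b = "\<lambda>x. Sup (TP x)"])
      fix x assume x: "x \<in> S" "TP x \<noteq> {}"
      have "TP x = {Inf (TP x)..Sup (TP x)}" using ivP[OF x] by blast
      moreover have "Inf (TP x) \<in> E" "Sup (TP x) \<in> E" using x unfolding E_def by blast+
      ultimately show "TP x = {Inf (TP x)..Sup (TP x)} \<and> Inf (TP x) \<in> E \<and> Sup (TP x) \<in> E" by blast
    qed (use d in auto)
    have jQ: "int (card {x\<in>S. TQ x \<noteq> {}}) =
        (\<Sum>e\<in>E. int (card {x\<in>S. e \<in> TQ x}) - int (card {x\<in>S. e-\<delta> \<in> TQ x}))"
    proof (rule count_by_jumps[OF fS fE, where a = "\<lambda>x. Inf (TQ x)" and b = "\<lambda>x. Sup (TQ x)"])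
      fix x assume x: "x \<in> S" "TQ x \<noteq> {}"
      have "TQ x = {Inf (TQ x)..Sup (TQ x)}" using ivQ[OF x] by blast
      moreover have "Inf (TQ x) \<in> E" "Sup (TQ x) \<in> E" using x unfolding E_def by blast+
      ultimately show "TQ x = {Inf (TQ x)..Sup (TQ x)} \<and> Inf (TQ x) \<in> E \<and> Sup (TQ x) \<in> E" by blast
    qed (use d in auto)
    have csP: "lattice_count P t = (if 0\<in>P then 1 else 0) + card {x\<in>S. t \<in> TP x}" if "0<t" "t\<le>s" for t
      unfolding S_def TP_def by (rule count_split[OF s R(1) RP that])
    have csQ: "lattice_count Q t = (if 0\<in>Q then 1 else 0) + card {x\<in>S. t \<in> TQ x}" if "0<t" "t\<le>s" for t
      unfolding S_def TQ_def by (rule count_split[OF s R(1) RQ that])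
    have diffP: "int (card {x\<in>S. e \<in> TP x}) - int (card {x\<in>S. e-\<delta> \<in> TP x})
        = int (lattice_count P e) - int (lattice_count P (e-\<delta>))" if "e \<in> E" for e
    proof -
      have "0 < e" "e \<le> s" "0 < e - \<delta>" "e - \<delta> \<le> s" using Epos[OF that] d(1,2) that by auto
      then show ?thesis using csP[of e] csP[of "e-\<delta>"] by simp
    qed
    have diffQ: "int (card {x\<in>S. e \<in> TQ x}) - int (card {x\<in>S. e-\<delta> \<in> TQ x})
        = int (lattice_count Q e) - int (lattice_count Q (e-\<delta>))" if "e \<in> E" for e
    proof -
      have "0 < e" "e \<le> s" "0 < e - \<delta>" "e - \<delta> \<le> s" using Epos[OF that] d(1,2) that by auto
      then show ?thesis using csQ[of e] csQ[of "e-\<delta>"] by simp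
    qed
    have LPQ: "lattice_count P t = lattice_count Q t" if "0 \<le> t" for t using assms(3) that by blast
    have "int (card {x\<in>S. TP x \<noteq> {}}) = int (card {x\<in>S. TQ x \<noteq> {}})"
    proof -
      have "int (card {x\<in>S. TP x \<noteq> {}}) = (\<Sum>e\<in>E. int (lattice_count P e) - int (lattice_count P (e-\<delta>)))"
        using jP diffP by simp
      also have "\<dots> = (\<Sum>e\<in>E. int (lattice_count Q e) - int (lattice_count Q (e-\<delta>)))"
      proof (rule sum.cong[OF refl])
        fix e assume "e \<in> E"
        then have "0 \<le> e" "0 \<le> e - \<delta>" using Epos d by (auto simp: less_imp_le)
        then show "int (lattice_count P e) - int (lattice_count P (e-\<delta>)) =
                   int (lattice_count Q e) - int (lattice_count Q (e-\<delta>))" using LPQ by simp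
      qed
      also have "\<dots> = int (card {x\<in>S. TQ x \<noteq> {}})" using jQ diffQ by simp
      finally show ?thesis .
    qed
    then have cardeq: "card {x\<in>S. TP x \<noteq> {}} = card {x\<in>S. TQ x \<noteq> {}}" by simp
    have "lattice_count (ppyr P) s = Suc (card {x\<in>S. TP x \<noteq> {}})"
      unfolding S_def TP_def by (rule ppyr_count[OF cP(2) s R(1) RP])
    moreover have "lattice_count (ppyr Q) s = Suc (card {x\<in>S. TQ x \<noteq> {}})"
      unfolding S_def TQ_def by (rule ppyr_count[OF cP(4) s R(1) RQ])
    ultimately show ?thesis using cardeq by simp
  qed
qed


end
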